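(* Let $W:\mathcal{X}\to\mathcal{Y}$ be a channel with $\mathcal{Y}$ finite, $n\in\mathbb{N}$, $0<\delta\le\sqrt{n}\log|\mathcal{Y}|$, and let $u_1,\dots,u_N\in\mathcal{X}^n$ satisfy $1-\frac12\|W_{u_j}-W_{u_k}\|_1\le 2^{-3\delta\sqrt{n}}$ for all $j\ne k$. Then there is a subset $\mathcal{C}\subset[N]$ with $|\mathcal{C}|\ge N/\lceil n\log|\mathcal{Y}|\rceil$ such that $\{(u_j,\mathcal{E}_j=\mathcal{T}^\delta_{u_j}):j\in\mathcal{C}\}$ is an $(n,|\mathcal{C}|,\lambda_1,\lambda_2)$-DI code with \[ \lambda_1=2\exp\!\left(-\delta^2/36K(|\mathcal{Y}|)\right),\qquad \lambda_2=2\exp\!\left(-\delta^2/36K(|\mathcal{Y}|)\right)+3\exp\!\left(-\delta\sqrt{n}\right). \]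
   Context: A channel $W:\mathcal{X}\to\mathcal{Y}$ ($\mathcal{X}$ a measurable space) is a measurable map $x\mapsto W_x\in\mathcal{P}(\mathcal{Y})$; $W_{x^n}(y^n)=\prod_{i=1}^nW_{x_i}(y_i)$. Logarithms and exponentials are base 2. $\|P-Q\|_1=\sum_y|P(y)-Q(y)|$; $H$ is Shannon entropy. The conditional typical set is $\mathcal{T}^\delta_{x^n}=\{y^n\in\mathcal{Y}^n:|\log W_{x^n}(y^n)+H(W_{x^n})|\le\delta\sqrt{n}\}$ and $K(d)=(\log\max\{d,3\})^2$. An $(n,M,\lambda_1,\lambda_2)$-DI code indexed by a set $\mathcal{C}$ of size $M$ is a family $\{(u_j,\mathcal{E}_j):j\in\mathcal{C}\}$, $u_j\in\mathcal{X}^n$, $\mathcal{E}_j\subset\mathcal{Y}^n$, with $W_{u_j}(\mathcal{E}_j)\ge1-\lambda_1$ for all $j$ and $W_{u_j}(\mathcal{E}_k)\le\lambda_2$ for all $j\ne k$. *)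

theory Defs
  imports Complex_Main "HOL-Library.FuncSet"
begin

definition channel :: "('x \<Rightarrow> 'y::finite \<Rightarrow> real) \<Rightarrow> bool" where
  "channel W \<longleftrightarrow> (\<forall>x. (\<forall>y. W x y \<ge> 0) \<and> (\<Sum>y\<in>UNIV. W x y) = 1)"

definition words :: "nat \<Rightarrow> (nat \<Rightarrow> 'y::finite) set" where
  "words n = PiE {..<n} (\<lambda>_. UNIV)"

definition Wn :: "('x \<Rightarrow> 'y \<Rightarrow> real) \<Rightarrow> nat \<Rightarrow> (nat \<Rightarrow> 'x) \<Rightarrow> (nat \<Rightarrow> 'y) \<Rightarrow> real" where
  "Wn W n x ys = (\<Prod>i<n. W (x i) (ys i))"

definition WP :: "('x \<Rightarrow> 'y::finite \<Rightarrow> real) \<Rightarrow> nat \<Rightarrow> (nat \<Rightarrow> 'x) \<Rightarrow> (nat \<Rightarrow> 'y) set \<Rightarrow> real" where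
  "WP W n x E = (\<Sum>ys\<in>E \<inter> words n. Wn W n x ys)"

definition Hn :: "('x \<Rightarrow> 'y::finite \<Rightarrow> real) \<Rightarrow> nat \<Rightarrow> (nat \<Rightarrow> 'x) \<Rightarrow> real" where
  "Hn W n x = - (\<Sum>ys\<in>words n. if Wn W n x ys = 0 then 0
                                  else Wn W n x ys * log 2 (Wn W n x ys))"

definition L1n :: "('x \<Rightarrow> 'y::finite \<Rightarrow> real) \<Rightarrow> nat \<Rightarrow> (nat \<Rightarrow> 'x) \<Rightarrow> (nat \<Rightarrow> 'x) \<Rightarrow> real" where
  "L1n W n x x' = (\<Sum>ys\<in>words n. \<bar>Wn W n x ys - Wn W n x' ys\<bar>)"

text \<open>Conditional typical set; words of probability 0 have log = -infinity and
  are therefore excluded.\<close>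
definition typical :: "('x \<Rightarrow> 'y::finite \<Rightarrow> real) \<Rightarrow> nat \<Rightarrow> real \<Rightarrow> (nat \<Rightarrow> 'x) \<Rightarrow> (nat \<Rightarrow> 'y) set" where
  "typical W n \<delta> x = {ys \<in> words n. Wn W n x ys > 0 \<and>
      \<bar>log 2 (Wn W n x ys) + Hn W n x\<bar> \<le> \<delta> * sqrt (real n)}"

definition K :: "real \<Rightarrow> real" where
  "K d = (log 2 (max d 3))^2"

definition DI_code :: "('x \<Rightarrow> 'y::finite \<Rightarrow> real) \<Rightarrow> nat \<Rightarrow> 'i set \<Rightarrow> ('i \<Rightarrow> nat \<Rightarrow> 'x)
      \<Rightarrow> ('i \<Rightarrow> (nat \<Rightarrow> 'y) set) \<Rightarrow> real \<Rightarrow> real \<Rightarrow> bool" where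
  "DI_code W n C u E l1 l2 \<longleftrightarrow>
     (\<forall>j\<in>C. E j \<subseteq> words n \<and> WP W n (u j) (E j) \<ge> 1 - l1) \<and>
     (\<forall>j\<in>C. \<forall>k\<in>C. j \<noteq> k \<longrightarrow> WP W n (u j) (E k) \<le> l2)"

end

theory Submission
  imports Defs
begin

definition lf :: "('y \<Rightarrow> real) \<Rightarrow> 'y \<Rightarrow> real" where
  "lf p y = (if p y = 0 then 0 else - ln (p y))"

definition ent :: "('y::finite \<Rightarrow> real) \<Rightarrow> real" where
  "ent p = (\<Sum>y\<in>UNIV. p y * lf p y)"

definition distr :: "('y::finite \<Rightarrow> real) \<Rightarrow> bool" where
  "distr p \<longleftrightarrow> (\<forall>y. p y \<ge> 0) \<and> sum p UNIV = 1"

lemma distr_le1: "distr p \<Longrightarrow> p y \<le> 1"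
  unfolding distr_def
  by (metis finite UNIV_I member_le_sum)

lemma lf_nonneg: "distr p \<Longrightarrow> lf p y \<ge> 0"
proof -
  assume a: "distr p"
  show ?thesis
  proof (cases "p y = 0")
    case False
    have "p y \<ge> 0" using a unfolding distr_def by blast
    then have "p y > 0" using False by linarith
    then have "ln (p y) \<le> 0" using distr_le1[OF a, of y] by simp
    then show ?thesis using False unfolding lf_def by simp
  qed (simp add: lf_def)
qed

lemma ent_nonneg: "distr p \<Longrightarrow> ent p \<ge> 0"
  unfolding ent_def distr_def
  by (intro sum_nonneg mult_nonneg_nonneg) (auto intro: lf_nonneg simp: distr_def)

lemma ent_le: fixes p :: "'y::finite \<Rightarrow> real" assumes "distr p" shows "ent p \<le> ln (real (card (UNIV :: 'y set)))"
proof -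
  define c where "c = real (card (UNIV :: 'y set))"
  have c: "c > 0" unfolding c_def by (simp add: card_gt_0_iff)
  have pt: "p y * (lf p y - ln c) \<le> 1 / c - p y" for y
  proof (cases "p y = 0")
    case True then show ?thesis using c by simp
  next
    case False
    then have py: "p y > 0" using assms unfolding distr_def by (metis less_eq_real_def)
    have "p y * (lf p y - ln c) = p y * ln (1 / (p y * c))"
      using py c False by (simp add: lf_def ln_div ln_mult)
    also have "\<dots> \<le> p y * (1 / (p y * c) - 1)"
      using py c by (intro mult_left_mono ln_le_minus_one) auto
    also have "\<dots> = 1 / c - p y" using py c by (simp add: field_simps)
    finally show ?thesis .
  qed
  have "(\<Sum>y\<in>UNIV. p y * (lf p y - ln c)) \<le> (\<Sum>y\<in>UNIV. 1 / c - p y)"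
    by (intro sum_mono pt)
  also have "\<dots> = 0" using assms c unfolding distr_def c_def by (simp add: sum_subtractf)
  moreover have "(\<Sum>y\<in>UNIV. p y * (lf p y - ln c)) = (\<Sum>y\<in>UNIV. p y * lf p y) - sum p UNIV * ln c"
    by (simp add: right_diff_distrib sum_subtractf sum_distrib_right)
  ultimately have "(\<Sum>y\<in>UNIV. p y * lf p y) - sum p UNIV * ln c \<le> 0" by linarith
  then show ?thesis using assms unfolding ent_def distr_def c_def by simp
qed

lemma exp_taylor2: "exp (u::real) \<le> 1 + u + u\<^sup>2 / 2 * exp \<bar>u\<bar>"
proof -
  obtain t where t: "\<bar>t\<bar> \<le> \<bar>u\<bar>" "exp u = (\<Sum>m<2. u ^ m / fact m) + exp t / fact 2 * u ^ 2"
    using Maclaurin_exp_le[of u 2] by blast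
  have "exp t \<le> exp \<bar>u\<bar>" using t(1) by simp
  then have "exp t / 2 * u\<^sup>2 \<le> exp \<bar>u\<bar> / 2 * u\<^sup>2"
    by (intro mult_right_mono) auto
  moreover have "exp u = 1 + u + exp t / 2 * u\<^sup>2" using t(2) by (simp add: numeral_2_eq_2)
  ultimately show ?thesis by (simp add: mult.commute)
qed

lemma exp_twelfth: "exp (1/12::real) \<le> 2"
  using exp_bound[of "1/12::real"] by (simp add: power2_eq_square)

lemma exp2_ge5: "exp (2::real) \<ge> 5"
  using exp_lower_Taylor_quadratic[of "2::real"] by simp

lemma xsq_bound: assumes "x \<ge> (0::real)" shows "x\<^sup>2 * exp (-(2/5) * x) \<le> 5"
proof -
  have a: "x / 5 \<le> exp (x / 5 - 1)" using exp_ge_add_one_self[of "x/5 - 1"] by simp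
  have "(x/5)\<^sup>2 \<le> (exp (x/5 - 1))\<^sup>2" using a assms by (intro power_mono) auto
  also have "\<dots> = exp (2/5 * x) / exp 2"
    by (simp add: power2_eq_square exp_add[symmetric] exp_diff[symmetric] algebra_simps)
  also have "\<dots> \<le> exp (2/5 * x) / 5" using exp2_ge5 by (intro divide_left_mono) auto
  finally have "x\<^sup>2 \<le> 5 * exp (2/5 * x)" by (simp add: power_divide)
  then have "x\<^sup>2 * exp (-(2/5) * x) \<le> 5 * exp (2/5 * x) * exp (-(2/5) * x)"
    by (intro mult_right_mono) auto
  also have "\<dots> = 5" by (simp add: exp_add[symmetric])
  finally show ?thesis .
qed

lemma point:
  fixes p h d m s :: real
  assumes p: "0 < p" "p \<le> 1" and h: "0 \<le> h" "h \<le> ln d" and d: "1 \<le> d" "ln d \<le> ln m"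
    and m: "1 \<le> ln m" and s: "\<bar>s\<bar> \<le> 1 / (24 * ln m)"
  shows "p * (-ln p - h)\<^sup>2 * exp \<bar>s * (-ln p - h)\<bar> \<le> 8 * p * (ln m)\<^sup>2 + 5 / d"
proof -
  define x where "x = - ln p"
  have x0: "x \<ge> 0" using p unfolding x_def by simp
  have px: "p = exp (- x)" using p unfolding x_def by simp
  have ld: "ln d \<ge> 0" using d by simp
  have s1: "\<bar>s\<bar> \<le> 1/24"
  proof -
    have "1 / (24 * ln m) \<le> 1 / 24" using m by (intro divide_left_mono) auto
    then show ?thesis using s by linarith
  qed
  show ?thesis
  proof (cases "x \<le> 2 * ln d")
    case True
    have Z: "\<bar>x - h\<bar> \<le> 2 * ln m" using True h x0 ld d by (auto simp: abs_if)
    have Z2: "(x - h)\<^sup>2 \<le> 4 * (ln m)\<^sup>2"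
    proof -
      have "(x - h)\<^sup>2 = \<bar>x - h\<bar>\<^sup>2" by simp
      also have "\<dots> \<le> (2 * ln m)\<^sup>2" using Z by (intro power_mono) auto
      finally show ?thesis by (simp add: power_mult_distrib)
    qed
    have "\<bar>s * (x - h)\<bar> = \<bar>s\<bar> * \<bar>x - h\<bar>" by (simp add: abs_mult)
    also have "\<dots> \<le> 1 / (24 * ln m) * (2 * ln m)" using s Z by (intro mult_mono) auto
    also have "\<dots> = 1/12" using m by (simp add: field_simps)
    finally have "exp \<bar>s * (x - h)\<bar> \<le> exp (1/12)" by simp
    then have E: "exp \<bar>s * (x - h)\<bar> \<le> 2" using exp_twelfth by linarith
    have "p * (x - h)\<^sup>2 * exp \<bar>s * (x - h)\<bar> \<le> p * (4 * (ln m)\<^sup>2) * 2"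
      using p Z2 E by (intro mult_mono) auto
    also have "\<dots> \<le> 8 * p * (ln m)\<^sup>2 + 5 / d" using d by simp
    finally show ?thesis unfolding x_def by simp
  next
    case False
    have Zp: "0 \<le> x - h" "x - h \<le> x" using False h ld by auto
    have Z2: "(x - h)\<^sup>2 \<le> x\<^sup>2" using Zp by (intro power_mono) auto
    have "\<bar>s * (x - h)\<bar> = \<bar>s\<bar> * (x - h)" using Zp by (simp add: abs_mult)
    also have "\<dots> \<le> 1/24 * x" using s1 Zp by (intro mult_mono) auto
    finally have E: "exp \<bar>s * (x - h)\<bar> \<le> exp (x / 24)" by simp
    have "p * (x - h)\<^sup>2 * exp \<bar>s * (x - h)\<bar> \<le> exp (-x) * x\<^sup>2 * exp (x / 24)"
      unfolding px using Z2 E by (intro mult_mono) auto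
    also have "\<dots> \<le> exp (- x / 2) * (x\<^sup>2 * exp (- (2/5) * x))"
    proof -
      have "exp (-x) * exp (x / 24) \<le> exp (- x / 2) * exp (- (2/5) * x)"
        unfolding exp_add[symmetric] using x0 by simp
      from mult_left_mono[OF this, of "x\<^sup>2"] show ?thesis by (simp add: algebra_simps)
    qed
    also have "\<dots> \<le> (1 / d) * 5"
    proof (intro mult_mono)
      have "exp (- x / 2) \<le> exp (- ln d)" using False by simp
      also have "\<dots> = 1 / d" using d by (simp add: exp_minus inverse_eq_divide)
      finally show "exp (- x / 2) \<le> 1 / d" .
    qed (use xsq_bound[OF x0] d in auto)
    also have "\<dots> \<le> 8 * p * (ln m)\<^sup>2 + 5 / d" using p by simp
    finally show ?thesis unfolding x_def by simp
  qed
qed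

lemma mgf_letter:
  fixes p :: "'y::finite \<Rightarrow> real" and m s :: real
  assumes P: "distr p" and m: "1 \<le> ln m" and dm: "ln (real (card (UNIV :: 'y set))) \<le> ln m"
    and s: "\<bar>s\<bar> \<le> 1 / (24 * ln m)"
  shows "(\<Sum>y\<in>UNIV. p y * exp (s * (lf p y - ent p))) \<le> exp (12 * s\<^sup>2 * (ln m)\<^sup>2)"
proof -
  define d where "d = real (card (UNIV :: 'y set))"
  define h where "h = ent p"
  have d1: "1 \<le> d" unfolding d_def by (simp add: Suc_le_eq card_gt_0_iff)
  have h: "0 \<le> h" "h \<le> ln d" using ent_nonneg[OF P] ent_le[OF P] unfolding h_def d_def by auto
  have pt: "p y * exp (s * (lf p y - h)) \<le> p y * (1 + s * (lf p y - h)) + s\<^sup>2 / 2 * (8 * p y * (ln m)\<^sup>2 + 5 / d)" for y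
  proof (cases "p y = 0")
    case True then show ?thesis using d1 by simp
  next
    case False
    then have py: "p y > 0" using P unfolding distr_def by (metis less_eq_real_def)
    have lf: "lf p y = - ln (p y)" using False unfolding lf_def by simp
    define u where "u = s * (lf p y - h)"
    have u2: "u\<^sup>2 = s\<^sup>2 * (- ln (p y) - h)\<^sup>2" unfolding u_def lf by (simp add: power_mult_distrib)
    have ua: "s * (- ln (p y) - h) = u" unfolding u_def lf by simp
    have pp: "p y * (- ln (p y) - h)\<^sup>2 * exp \<bar>u\<bar> \<le> 8 * p y * (ln m)\<^sup>2 + 5 / d"
      using point[OF py distr_le1[OF P] h d1 _ m s] dm unfolding d_def ua by auto
    have "p y * exp u \<le> p y * (1 + u + u\<^sup>2 / 2 * exp \<bar>u\<bar>)"
      using py exp_taylor2[of u] by (intro mult_left_mono) auto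
    also have "\<dots> = p y * (1 + u) + s\<^sup>2 / 2 * (p y * (- ln (p y) - h)\<^sup>2 * exp \<bar>u\<bar>)"
      unfolding u2 by (simp add: algebra_simps)
    also have "\<dots> \<le> p y * (1 + u) + s\<^sup>2 / 2 * (8 * p y * (ln m)\<^sup>2 + 5 / d)"
      using pp by (intro add_left_mono mult_left_mono) auto
    finally show ?thesis unfolding u_def by simp
  qed
  have "(\<Sum>y\<in>UNIV. p y * exp (s * (lf p y - h))) \<le>
        (\<Sum>y\<in>UNIV. p y * (1 + s * (lf p y - h)) + s\<^sup>2 / 2 * (8 * p y * (ln m)\<^sup>2 + 5 / d))"
    by (intro sum_mono pt)
  also have "\<dots> = (\<Sum>y\<in>UNIV. p y) + s * ((\<Sum>y\<in>UNIV. p y * lf p y) - h * (\<Sum>y\<in>UNIV. p y))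
      + s\<^sup>2 / 2 * (8 * (\<Sum>y\<in>UNIV. p y) * (ln m)\<^sup>2 + real (card (UNIV :: 'y set)) * (5 / d))"
    by (simp add: sum.distrib sum_distrib_left sum_distrib_right sum_subtractf algebra_simps)
  also have "\<dots> = 1 + s\<^sup>2 / 2 * (8 * (ln m)\<^sup>2 + 5)"
    using P d1 unfolding distr_def h_def ent_def d_def by simp
  also have "\<dots> \<le> 1 + 12 * s\<^sup>2 * (ln m)\<^sup>2"
  proof -
    have "1 \<le> (ln m)\<^sup>2" using m by (simp add: one_le_power)
    then have "8 * (ln m)\<^sup>2 + 5 \<le> 24 * (ln m)\<^sup>2" by simp
    then have "s\<^sup>2 / 2 * (8 * (ln m)\<^sup>2 + 5) \<le> s\<^sup>2 / 2 * (24 * (ln m)\<^sup>2)"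
      by (intro mult_left_mono) auto
    then show ?thesis by simp
  qed
  also have "\<dots> \<le> exp (12 * s\<^sup>2 * (ln m)\<^sup>2)" by (rule exp_ge_add_one_self)
  finally show ?thesis unfolding h_def .
qed

lemma channel_distr: "channel W \<Longrightarrow> distr (W x)"
  unfolding channel_def distr_def by auto

lemma finite_words: "finite (words n)"
  unfolding words_def by (simp add: finite_PiE)

lemma Wn_prod:
  "(\<Sum>ys\<in>words n. Wn W n x ys * (\<Prod>i<n. f i (ys i))) = (\<Prod>i<n. \<Sum>y\<in>UNIV. W (x i) y * f i y)"
proof -
  have "(\<Prod>i<n. \<Sum>y\<in>UNIV. W (x i) y * f i y) = (\<Sum>g\<in>words n. \<Prod>i<n. W (x i) (g i) * f i (g i))"
    unfolding words_def by (rule prod_sum_PiE) auto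
  then show ?thesis unfolding Wn_def by (simp add: prod.distrib)
qed

lemma sum_Wn: "channel W \<Longrightarrow> (\<Sum>ys\<in>words n. Wn W n x ys) = 1"
  using Wn_prod[of W n x "\<lambda>_ _. 1"] unfolding channel_def by simp

lemma Wn_nonneg: "channel W \<Longrightarrow> Wn W n x ys \<ge> 0"
  unfolding channel_def Wn_def by (simp add: prod_nonneg)

lemma marginal:
  assumes "channel W" "i < n"
  shows "(\<Sum>ys\<in>words n. Wn W n x ys * g (ys i)) = (\<Sum>y\<in>UNIV. W (x i) y * g y)"
proof -
  have "(\<Sum>ys\<in>words n. Wn W n x ys * g (ys i))
      = (\<Sum>ys\<in>words n. Wn W n x ys * (\<Prod>j<n. (if j = i then g else (\<lambda>_. 1)) (ys j)))"
  proof (intro sum.cong refl)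
    fix ys
    have "(\<Prod>j<n. (if j = i then g else (\<lambda>_. 1)) (ys j)) = (\<Prod>j<n. if j = i then g (ys j) else 1)"
      by (intro prod.cong) auto
    also have "\<dots> = g (ys i)" using assms(2) by simp
    finally show "Wn W n x ys * g (ys i) = Wn W n x ys * (\<Prod>j<n. (if j = i then g else (\<lambda>_. 1)) (ys j))"
      by simp
  qed
  also have "\<dots> = (\<Prod>j<n. \<Sum>y\<in>UNIV. W (x j) y * (if j = i then g else (\<lambda>_. 1)) y)"
    by (rule Wn_prod)
  also have "\<dots> = (\<Prod>j<n. if j = i then (\<Sum>y\<in>UNIV. W (x i) y * g y) else 1)"
    using assms(1) unfolding channel_def by (intro prod.cong) auto
  also have "\<dots> = (\<Sum>y\<in>UNIV. W (x i) y * g y)" using assms(2) by simp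
  finally show ?thesis .
qed

definition Lf :: "('x \<Rightarrow> 'y::finite \<Rightarrow> real) \<Rightarrow> nat \<Rightarrow> (nat \<Rightarrow> 'x) \<Rightarrow> (nat \<Rightarrow> 'y) \<Rightarrow> real" where
  "Lf W n x ys = (\<Sum>i<n. lf (W (x i)) (ys i))"

definition Hx :: "('x \<Rightarrow> 'y::finite \<Rightarrow> real) \<Rightarrow> nat \<Rightarrow> (nat \<Rightarrow> 'x) \<Rightarrow> real" where
  "Hx W n x = (\<Sum>i<n. ent (W (x i)))"

lemma Wn_pos_factor:
  assumes "channel W" "Wn W n x ys > 0" "i < n"
  shows "W (x i) (ys i) > 0"
proof -
  have "W (x i) (ys i) \<noteq> 0"
  proof
    assume "W (x i) (ys i) = 0"
    then have "Wn W n x ys = 0" unfolding Wn_def using assms(3) by (intro prod_zero) auto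
    then show False using assms(2) by simp
  qed
  moreover have "W (x i) (ys i) \<ge> 0" using assms(1) unfolding channel_def by auto
  ultimately show ?thesis by simp
qed

lemma ln_Wn:
  assumes "channel W" "Wn W n x ys > 0"
  shows "ln (Wn W n x ys) = - Lf W n x ys"
proof -
  have "ln (Wn W n x ys) = (\<Sum>i<n. ln (W (x i) (ys i)))"
    unfolding Wn_def using Wn_pos_factor[OF assms] by (intro ln_prod) (auto dest: less_imp_neq[symmetric])
  also have "\<dots> = (\<Sum>i<n. - lf (W (x i)) (ys i))"
    using Wn_pos_factor[OF assms] by (intro sum.cong) (auto simp: lf_def)
  finally show ?thesis unfolding Lf_def by (simp add: sum_negf)
qed

lemma Hn_add:
  assumes "channel W"
  shows "Hn W n x = Hx W n x / ln 2"
proof -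
  have pt: "(if Wn W n x ys = 0 then 0 else Wn W n x ys * log 2 (Wn W n x ys))
      = - (Wn W n x ys * Lf W n x ys) / ln 2" for ys
  proof (cases "Wn W n x ys = 0")
    case False
    then have "Wn W n x ys > 0" using Wn_nonneg[OF assms, of n x ys] by simp
    then show ?thesis using ln_Wn[OF assms] False by (simp add: log_def)
  qed simp
  have "Hn W n x = (\<Sum>ys\<in>words n. Wn W n x ys * Lf W n x ys) / ln 2"
    unfolding Hn_def pt by (simp add: sum_divide_distrib sum_negf)
  also have "(\<Sum>ys\<in>words n. Wn W n x ys * Lf W n x ys)
     = (\<Sum>i<n. \<Sum>ys\<in>words n. Wn W n x ys * lf (W (x i)) (ys i))"
    unfolding Lf_def by (simp add: sum_distrib_left sum.swap[of _ "words n"])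
  also have "\<dots> = (\<Sum>i<n. ent (W (x i)))"
    using marginal[OF assms] unfolding ent_def by (intro sum.cong) auto
  finally show ?thesis unfolding Hx_def .
qed

lemma mgf_vec:
  fixes W :: "'x \<Rightarrow> 'y::finite \<Rightarrow> real"
  assumes ch: "channel W" and m: "1 \<le> ln m" and dm: "ln (real (card (UNIV :: 'y set))) \<le> ln m"
    and s: "\<bar>s\<bar> \<le> 1 / (24 * ln m)"
  shows "(\<Sum>ys\<in>words n. Wn W n x ys * exp (s * (Lf W n x ys - Hx W n x))) \<le> exp (12 * s\<^sup>2 * (ln m)\<^sup>2) ^ n"
proof -
  have e: "exp (s * (Lf W n x ys - Hx W n x)) = (\<Prod>i<n. exp (s * (lf (W (x i)) (ys i) - ent (W (x i)))))" for ys
  proof -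
    have "s * (Lf W n x ys - Hx W n x) = (\<Sum>i<n. s * (lf (W (x i)) (ys i) - ent (W (x i))))"
      unfolding Lf_def Hx_def by (simp add: sum_subtractf sum_distrib_left right_diff_distrib)
    then show ?thesis by (simp add: exp_sum)
  qed
  have "(\<Sum>ys\<in>words n. Wn W n x ys * exp (s * (Lf W n x ys - Hx W n x)))
      = (\<Prod>i<n. \<Sum>y\<in>UNIV. W (x i) y * exp (s * (lf (W (x i)) y - ent (W (x i)))))"
    unfolding e by (rule Wn_prod)
  also have "\<dots> \<le> (\<Prod>i<n. exp (12 * s\<^sup>2 * (ln m)\<^sup>2))"
  proof (rule prod_mono)
    fix i
    show "0 \<le> (\<Sum>y\<in>UNIV. W (x i) y * exp (s * (lf (W (x i)) y - ent (W (x i))))) \<and>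
        (\<Sum>y\<in>UNIV. W (x i) y * exp (s * (lf (W (x i)) y - ent (W (x i))))) \<le> exp (12 * s\<^sup>2 * (ln m)\<^sup>2)"
      using mgf_letter[OF channel_distr[OF ch] m dm s] ch unfolding channel_def
      by (auto intro: sum_nonneg)
  qed
  also have "\<dots> = exp (12 * s\<^sup>2 * (ln m)\<^sup>2) ^ n" by simp
  finally show ?thesis .
qed

lemma tail:
  fixes W :: "'x \<Rightarrow> 'y::finite \<Rightarrow> real"
  assumes ch: "channel W" and m: "1 \<le> ln m" and dm: "ln (real (card (UNIV :: 'y set))) \<le> ln m"
    and A: "0 < A" "A \<le> real n * ln m"
    and S: "\<And>ys. ys \<in> words n - S \<Longrightarrow> Wn W n x ys = 0 \<or> A < \<bar>Hx W n x - Lf W n x ys\<bar>"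
  shows "(\<Sum>ys\<in>words n - S. Wn W n x ys) \<le> 2 * exp (- (A\<^sup>2) / (48 * real n * (ln m)\<^sup>2))"
proof -
  have n: "real n > 0" using A m by (smt (verit) mult_nonpos_nonneg of_nat_0_le_iff of_nat_0_less_iff)
  define c where "c = (ln m)\<^sup>2"
  have c: "c \<ge> 1" unfolding c_def using m by (simp add: one_le_power)
  define t where "t = A / (24 * real n * c)"
  have t0: "t \<ge> 0" unfolding t_def using A n c by simp
  have t1: "t \<le> 1 / (24 * ln m)"
  proof -
    have "t = A / (24 * real n * c)" by (fact t_def)
    also have "\<dots> \<le> (real n * ln m) / (24 * real n * c)" using A n c by (intro divide_right_mono) auto
    also have "\<dots> = 1 / (24 * ln m)" unfolding c_def using n m by (simp add: power2_eq_square field_simps)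
    finally show ?thesis .
  qed
  define D where "D = (\<lambda>ys. Lf W n x ys - Hx W n x)"
  have pt: "Wn W n x ys \<le> Wn W n x ys * (exp (t * D ys) * exp (- t * A) + exp ((- t) * D ys) * exp (- t * A))"
    if "ys \<in> words n - S" for ys
  proof (cases "Wn W n x ys = 0")
    case False
    then have gt: "A < \<bar>D ys\<bar>" using S[OF that] unfolding D_def by (simp add: abs_minus_commute)
    have "1 \<le> exp (t * D ys) * exp (- t * A) + exp ((- t) * D ys) * exp (- t * A)"
    proof (cases "D ys \<ge> 0")
      case True
      then have "t * A \<le> t * D ys" using gt t0 by (intro mult_left_mono) auto
      then have "1 \<le> exp (t * D ys) * exp (- t * A)" by (simp add: exp_add[symmetric])
      then show ?thesis by (smt (verit) exp_gt_zero mult_pos_pos)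
    next
      case False
      then have "t * A \<le> t * (- D ys)" using gt t0 by (intro mult_left_mono) auto
      then have "1 \<le> exp ((- t) * D ys) * exp (- t * A)" by (simp add: exp_add[symmetric])
      then show ?thesis by (smt (verit) exp_gt_zero mult_pos_pos)
    qed
    then show ?thesis using Wn_nonneg[OF ch, of n x ys] by (metis mult_left_mono mult.right_neutral)
  qed simp
  have "(\<Sum>ys\<in>words n - S. Wn W n x ys) \<le>
      (\<Sum>ys\<in>words n - S. Wn W n x ys * (exp (t * D ys) * exp (- t * A) + exp ((- t) * D ys) * exp (- t * A)))"
    by (intro sum_mono pt)
  also have "\<dots> \<le> (\<Sum>ys\<in>words n. Wn W n x ys * (exp (t * D ys) * exp (- t * A) + exp ((- t) * D ys) * exp (- t * A)))"
    using Wn_nonneg[OF ch] finite_words by (intro sum_mono2) auto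
  also have "\<dots> = exp (- t * A) * ((\<Sum>ys\<in>words n. Wn W n x ys * exp (t * D ys)) + (\<Sum>ys\<in>words n. Wn W n x ys * exp ((- t) * D ys)))"
    by (simp add: sum.distrib sum_distrib_left algebra_simps)
  also have "\<dots> \<le> exp (- t * A) * (exp (12 * t\<^sup>2 * (ln m)\<^sup>2) ^ n + exp (12 * (- t)\<^sup>2 * (ln m)\<^sup>2) ^ n)"
    unfolding D_def using t0 t1
    by (intro mult_left_mono add_mono mgf_vec[OF ch m dm]) auto
  also have "\<dots> = 2 * exp (real n * (12 * t\<^sup>2 * c) - t * A)"
    unfolding c_def by (simp add: exp_of_nat_mult[symmetric] exp_add[symmetric] exp_diff exp_minus field_simps)
  also have "real n * (12 * t\<^sup>2 * c) - t * A = - (A\<^sup>2) / (48 * real n * c)"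
    unfolding t_def using n c by (simp add: power2_eq_square field_simps)
  finally show ?thesis unfolding c_def .
qed

lemma typical_sub: "typical W n \<delta> x \<subseteq> words n"
  unfolding typical_def by auto

lemma typical_eq:
  assumes ch: "channel W"
  shows "typical W n \<delta> x = {ys\<in>words n. Wn W n x ys > 0 \<and> \<bar>Hx W n x - Lf W n x ys\<bar> \<le> \<delta> * sqrt (real n) * ln 2}"
proof -
  have "\<bar>log 2 (Wn W n x ys) + Hn W n x\<bar> \<le> \<delta> * sqrt (real n) \<longleftrightarrow> \<bar>Hx W n x - Lf W n x ys\<bar> \<le> \<delta> * sqrt (real n) * ln 2"
    if "Wn W n x ys > 0" for ys
  proof -
    have "log 2 (Wn W n x ys) + Hn W n x = (Hx W n x - Lf W n x ys) / ln 2"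
      using ln_Wn[OF ch that] Hn_add[OF ch] by (simp add: log_def field_simps)
    then have "\<bar>log 2 (Wn W n x ys) + Hn W n x\<bar> = \<bar>Hx W n x - Lf W n x ys\<bar> / ln 2" by simp
    then show ?thesis by (simp add: pos_divide_le_eq)
  qed
  then show ?thesis unfolding typical_def by auto
qed

lemma WP_compl:
  assumes ch: "channel W" and T: "T \<subseteq> words n"
  shows "WP W n x T = 1 - (\<Sum>ys\<in>words n - T. Wn W n x ys)"
proof -
  have "1 = (\<Sum>ys\<in>words n. Wn W n x ys)" using sum_Wn[OF ch] by simp
  also have "\<dots> = (\<Sum>ys\<in>words n - T. Wn W n x ys) + (\<Sum>ys\<in>T. Wn W n x ys)"
    using T finite_words by (rule sum.subset_diff)
  finally show ?thesis unfolding WP_def using T by (simp add: Int_absorb2)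
qed

lemma WP_typ:
  fixes W :: "'x \<Rightarrow> 'y::finite \<Rightarrow> real"
  assumes ch: "channel W" and m: "1 \<le> ln m" and dm: "ln (real (card (UNIV :: 'y set))) \<le> ln m"
    and A: "0 < \<delta> * sqrt (real n) * ln 2" "\<delta> * sqrt (real n) * ln 2 \<le> real n * ln m"
  shows "1 - WP W n x (typical W n \<delta> x) \<le> 2 * exp (- ((\<delta> * sqrt (real n) * ln 2)\<^sup>2) / (48 * real n * (ln m)\<^sup>2))"
proof -
  have "1 - WP W n x (typical W n \<delta> x) = (\<Sum>ys\<in>words n - typical W n \<delta> x. Wn W n x ys)"
    using WP_compl[OF ch typical_sub[of W n \<delta> x]] by simp
  also have "\<dots> \<le> 2 * exp (- ((\<delta> * sqrt (real n) * ln 2)\<^sup>2) / (48 * real n * (ln m)\<^sup>2))"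
  proof (rule tail[OF ch m dm A])
    fix ys assume "ys \<in> words n - typical W n \<delta> x"
    then show "Wn W n x ys = 0 \<or> \<delta> * sqrt (real n) * ln 2 < \<bar>Hx W n x - Lf W n x ys\<bar>"
      using Wn_nonneg[OF ch, of n x ys] unfolding typical_eq[OF ch] by auto
  qed
  finally show ?thesis .
qed

lemma ln2_le: "ln 2 \<le> (3/4::real)"
proof -
  have "2 \<le> exp (3/4::real)" using exp_lower_Taylor_quadratic[of "3/4::real"] by (simp add: power2_eq_square)
  then have "ln 2 \<le> ln (exp (3/4::real))" by (subst ln_le_cancel_iff) auto
  then show ?thesis by simp
qed

lemma lam1_cmp:
  assumes n: "real n > 0" and m: "1 \<le> ln m"
  shows "exp (- ((\<delta> * sqrt (real n) * ln 2)\<^sup>2) / (48 * real n * (ln m)\<^sup>2)) \<le> 2 powr (- (\<delta>\<^sup>2) / (36 * (log 2 m)\<^sup>2))"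
proof -
  define Q where "Q = \<delta>\<^sup>2 * (ln 2)\<^sup>2 / (ln m)\<^sup>2"
  have Q: "Q \<ge> 0" unfolding Q_def by simp
  have l: "- ((\<delta> * sqrt (real n) * ln 2)\<^sup>2) / (48 * real n * (ln m)\<^sup>2) = - Q / 48"
    unfolding Q_def using n m by (simp add: power_mult_distrib field_simps)
  have r: "2 powr (- (\<delta>\<^sup>2) / (36 * (log 2 m)\<^sup>2)) = exp (- (Q * ln 2 / 36))"
    unfolding Q_def powr_def log_def using m by (simp add: power_divide field_simps power2_eq_square)
  have "Q * ln 2 / 36 \<le> Q / 48"
  proof -
    have "Q * ln 2 \<le> Q * (3/4)" using Q ln2_le by (intro mult_left_mono) auto
    then show ?thesis by simp
  qed
  then show ?thesis unfolding l r by simp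
qed

lemma min_sum: "(\<Sum>ys\<in>words n. min (Wn W n x ys) (Wn W n x' ys)) = 1 - L1n W n x x' / 2"
  if "channel W"
proof -
  have "(\<Sum>ys\<in>words n. min (Wn W n x ys) (Wn W n x' ys))
     = (\<Sum>ys\<in>words n. (Wn W n x ys + Wn W n x' ys - \<bar>Wn W n x ys - Wn W n x' ys\<bar>) / 2)"
    by (intro sum.cong) (auto simp: min_def)
  also have "\<dots> = ((\<Sum>ys\<in>words n. Wn W n x ys) + (\<Sum>ys\<in>words n. Wn W n x' ys) - L1n W n x x') / 2"
    unfolding L1n_def sum_divide_distrib[symmetric] by (simp add: sum.distrib sum_subtractf)
  finally show ?thesis using sum_Wn[OF that] by simp
qed

lemma cross:
  assumes ch: "channel W" and a: "0 \<le> \<delta> * sqrt (real n)"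
    and H: "Hn W n x' - Hn W n x \<le> 1"
    and L: "1 - L1n W n x x' / 2 \<le> 2 powr (- 3 * (\<delta> * sqrt (real n)))"
  shows "WP W n x (typical W n \<delta> x') \<le> (1 - WP W n x (typical W n \<delta> x)) + 2 * 2 powr (- (\<delta> * sqrt (real n)))"
proof -
  define a where "a = \<delta> * sqrt (real n)"
  define T where "T = typical W n \<delta> x"
  define T' where "T' = typical W n \<delta> x'"
  define c :: real where "c = 2 powr (1 + 2 * a)"
  have c1: "c \<ge> 1" unfolding c_def using a a_def by (intro ge_one_powr_ge_zero) auto
  have TT: "T \<subseteq> words n" "T' \<subseteq> words n" unfolding T_def T'_def unfolding typical_def by auto
  have pt: "Wn W n x ys \<le> c * min (Wn W n x ys) (Wn W n x' ys)" if "ys \<in> T' \<inter> T" for ys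
  proof -
    have P: "Wn W n x ys > 0" "\<bar>log 2 (Wn W n x ys) + Hn W n x\<bar> \<le> a"
      using that unfolding T_def typical_def a_def by auto
    have P': "Wn W n x' ys > 0" "\<bar>log 2 (Wn W n x' ys) + Hn W n x'\<bar> \<le> a"
      using that unfolding T'_def typical_def a_def by auto
    have "log 2 (Wn W n x ys) \<le> log 2 (Wn W n x' ys) + (1 + 2 * a)" using P P' H by linarith
    then have "2 powr (log 2 (Wn W n x ys)) \<le> 2 powr (log 2 (Wn W n x' ys) + (1 + 2 * a))" by simp
    then have "Wn W n x ys \<le> Wn W n x' ys * c" using P P' unfolding c_def by (simp add: powr_add)
    moreover have "Wn W n x ys \<le> Wn W n x ys * c" using c1 P by simp
    ultimately show ?thesis by (simp add: min_def mult.commute)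
  qed
  have "WP W n x T' = (\<Sum>ys\<in>T'. Wn W n x ys)" unfolding WP_def using TT by (simp add: Int_absorb2)
  also have "\<dots> = (\<Sum>ys\<in>T' \<inter> T. Wn W n x ys) + (\<Sum>ys\<in>T' - T. Wn W n x ys)"
    using TT finite_words by (intro sum.Int_Diff) (auto intro: finite_subset)
  also have "(\<Sum>ys\<in>T' - T. Wn W n x ys) \<le> (\<Sum>ys\<in>words n - T. Wn W n x ys)"
    using TT finite_words Wn_nonneg[OF ch] by (intro sum_mono2) auto
  also have "\<dots> = 1 - WP W n x T" using WP_compl[OF ch TT(1)] by simp
  also have "(\<Sum>ys\<in>T' \<inter> T. Wn W n x ys) \<le> (\<Sum>ys\<in>T' \<inter> T. c * min (Wn W n x ys) (Wn W n x' ys))"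
    by (intro sum_mono pt)
  also have "\<dots> \<le> (\<Sum>ys\<in>words n. c * min (Wn W n x ys) (Wn W n x' ys))"
    using TT finite_words Wn_nonneg[OF ch] c1 by (intro sum_mono2) auto
  also have "\<dots> = c * (1 - L1n W n x x' / 2)" using min_sum[OF ch] by (simp add: sum_distrib_left[symmetric])
  also have "\<dots> \<le> c * 2 powr (- 3 * a)" using L c1 unfolding a_def by (intro mult_left_mono) auto
  also have "\<dots> = 2 powr ((1 + 2 * a) + (- 3 * a))" unfolding c_def by (rule powr_add[symmetric])
  also have "(1 + 2 * a) + (- 3 * a) = 1 + (- a)" by simp
  also have "2 powr (1 + (- a)) = 2 * 2 powr (- a)" using powr_add[of 2 1 "- a"] by simp
  finally show ?thesis unfolding T_def T'_def a_def by linarith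
qed

theorem theorem3:
  fixes W :: "'x \<Rightarrow> 'y::finite \<Rightarrow> real"
    and n N :: nat and \<delta> :: real and u :: "nat \<Rightarrow> nat \<Rightarrow> 'x"
  assumes "channel W"
    and "0 < \<delta>" and "\<delta> \<le> sqrt (real n) * log 2 (real (card (UNIV :: 'y set)))"
    and "\<forall>j\<in>{1..N}. \<forall>k\<in>{1..N}. j \<noteq> k \<longrightarrow>
           1 - L1n W n (u j) (u k) / 2 \<le> 2 powr (- 3 * \<delta> * sqrt (real n))"
  shows "\<exists>C \<subseteq> {1..N}.
     real (card C) \<ge> real N / real_of_int \<lceil>real n * log 2 (real (card (UNIV :: 'y set)))\<rceil> \<and>
     DI_code W n C u (\<lambda>j. typical W n \<delta> (u j))
       (2 * 2 powr (- (\<delta> ^ 2) / (36 * K (real (card (UNIV :: 'y set))))))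
       (2 * 2 powr (- (\<delta> ^ 2) / (36 * K (real (card (UNIV :: 'y set))))) + 3 * 2 powr (- \<delta> * sqrt (real n)))"
proof -
  note ch = assms(1)
  define d where "d = real (card (UNIV :: 'y set))"
  define m where "m = max d 3"
  define lam1 where "lam1 = 2 * 2 powr (- (\<delta> ^ 2) / (36 * K d))"
  have d1: "d \<ge> 1" unfolding d_def by (simp add: Suc_le_eq card_gt_0_iff)
  have prod_pos: "sqrt (real n) * log 2 d > 0" using assms(2,3) unfolding d_def by linarith
  have lgd: "log 2 d > 0" and sn: "sqrt (real n) > 0"
    using prod_pos by (auto simp: zero_less_mult_iff)
  have n0: "real n > 0" using sn by simp
  have m3: "m \<ge> 3" unfolding m_def by simp
  have lm: "1 \<le> ln m"
  proof -
    have "ln (exp 1) \<le> ln m" using exp_le m3 by (subst ln_le_cancel_iff) auto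
    then show ?thesis by simp
  qed
  have dm: "ln (real (card (UNIV :: 'y set))) \<le> ln m"
    using d1 unfolding d_def[symmetric] m_def by (subst ln_le_cancel_iff) auto
  have A0: "0 < \<delta> * sqrt (real n) * ln 2" using assms(2) sn by simp
  have A1: "\<delta> * sqrt (real n) * ln 2 \<le> real n * ln m"
  proof -
    have "\<delta> * sqrt (real n) \<le> sqrt (real n) * log 2 d * sqrt (real n)"
      using assms(3) sn unfolding d_def by (intro mult_right_mono) auto
    also have "\<dots> = real n * log 2 d" using n0 by (simp add: algebra_simps)
    finally have "\<delta> * sqrt (real n) * ln 2 \<le> real n * log 2 d * ln 2" by (intro mult_right_mono) auto
    also have "\<dots> = real n * ln d" by (simp add: log_def)
    also have "\<dots> \<le> real n * ln m" using d1 unfolding m_def by (intro mult_left_mono) auto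
    finally show ?thesis .
  qed
  have lam1: "1 - WP W n x (typical W n \<delta> x) \<le> lam1" for x
  proof -
    have "1 - WP W n x (typical W n \<delta> x) \<le> 2 * exp (- ((\<delta> * sqrt (real n) * ln 2)\<^sup>2) / (48 * real n * (ln m)\<^sup>2))"
      by (rule WP_typ[OF ch lm dm A0 A1])
    also have "\<dots> \<le> 2 * 2 powr (- (\<delta>\<^sup>2) / (36 * (log 2 m)\<^sup>2))"
      using lam1_cmp[OF n0 lm, of \<delta>] by simp
    finally show ?thesis unfolding lam1_def K_def m_def .
  qed
  have Hb: "0 \<le> Hn W n x \<and> Hn W n x \<le> real n * log 2 d" for x
  proof -
    have "0 \<le> Hx W n x" unfolding Hx_def using ent_nonneg[OF channel_distr[OF ch]] by (simp add: sum_nonneg)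
    moreover have "Hx W n x \<le> (\<Sum>i<n. ln d)"
      unfolding Hx_def d_def using ent_le[OF channel_distr[OF ch]] by (intro sum_mono) auto
    ultimately show ?thesis using Hn_add[OF ch, of n x] by (simp add: log_def divide_right_mono)
  qed
  define M where "M = \<lceil>real n * log 2 d\<rceil>"
  define Mn where "Mn = nat M"
  have M1: "M \<ge> 1" unfolding M_def using n0 lgd by (simp add: zero_less_mult_iff)
  have MnM: "real Mn = real_of_int M" unfolding Mn_def using M1 by simp
  have Mn1: "Mn \<ge> 1" using M1 unfolding Mn_def by simp
  have nMn: "real n * log 2 d \<le> real Mn" unfolding MnM M_def by simp
  define bk where "bk = (\<lambda>j. min (nat \<lfloor>Hn W n (u j)\<rfloor>) (Mn - 1))"
  have bkb: "bk j < Mn \<and> real (bk j) \<le> Hn W n (u j) \<and> Hn W n (u j) \<le> real (bk j) + 1" for j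
  proof -
    define h where "h = Hn W n (u j)"
    have h: "0 \<le> h" "h \<le> real Mn" using Hb[of "u j"] nMn unfolding h_def by auto
    define f where "f = nat \<lfloor>h\<rfloor>"
    have f: "real f \<le> h" "h < real f + 1" unfolding f_def using h
      by (auto simp: of_nat_nat)
    show ?thesis
    proof (cases "f \<le> Mn - 1")
      case True
      then have "bk j = f" unfolding bk_def f_def h_def by simp
      then show ?thesis using True f Mn1 unfolding h_def by auto
    next
      case False
      then have "bk j = Mn - 1" unfolding bk_def f_def h_def by simp
      moreover have "real (Mn - 1) \<le> h" using False f by (simp add: of_nat_diff)
      moreover have "h \<le> real (Mn - 1) + 1" using h Mn1 by (simp add: of_nat_diff)
      ultimately show ?thesis using Mn1 unfolding h_def by auto
    qed
  qed
  define F where "F = (\<lambda>b. {j\<in>{1..N}. bk j = b})"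
  have sumF: "real N = (\<Sum>b<Mn. real (card (F b)))"
  proof -
    have "(\<Sum>b<Mn. \<Sum>j\<in>{j. j \<in> {1..N} \<and> bk j = b}. (1::nat)) = (\<Sum>j\<in>{1..N}. 1)"
      using bkb by (intro sum.group) auto
    then have "N = (\<Sum>b<Mn. card (F b))" unfolding F_def by simp
    then show ?thesis by (metis of_nat_sum)
  qed
  obtain b where b: "b < Mn" "real N / real Mn \<le> real (card (F b))"
  proof (rule ccontr)
    assume "\<not> thesis"
    then have lt: "\<And>b. b < Mn \<Longrightarrow> real (card (F b)) < real N / real Mn" using that by force
    have "(\<Sum>b<Mn. real (card (F b))) < (\<Sum>b<Mn. real N / real Mn)"
      using Mn1 lt by (intro sum_strict_mono) (auto simp: lessThan_empty_iff)
    also have "\<dots> = real N" using Mn1 by simp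
    finally show False using sumF by simp
  qed
  define C where "C = F b"
  have CF: "j \<in> C \<Longrightarrow> j \<in> {1..N} \<and> bk j = b" for j unfolding C_def F_def by auto
  show ?thesis
  proof (intro exI[of _ C] conjI)
    show "C \<subseteq> {1..N}" using CF by auto
    show "real N / real_of_int \<lceil>real n * log 2 (real (card (UNIV :: 'y set)))\<rceil> \<le> real (card C)"
      using b(2) MnM unfolding C_def M_def d_def by simp
    show "DI_code W n C u (\<lambda>j. typical W n \<delta> (u j))
       (2 * 2 powr (- (\<delta> ^ 2) / (36 * K (real (card (UNIV :: 'y set))))))
       (2 * 2 powr (- (\<delta> ^ 2) / (36 * K (real (card (UNIV :: 'y set))))) + 3 * 2 powr (- \<delta> * sqrt (real n)))"
      unfolding DI_code_def d_def[symmetric] lam1_def[symmetric]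
    proof (intro conjI ballI impI)
      fix j assume "j \<in> C"
      show "typical W n \<delta> (u j) \<subseteq> words n" by (rule typical_sub)
      show "1 - lam1 \<le> WP W n (u j) (typical W n \<delta> (u j))" using lam1[of "u j"] by simp
    next
      fix j k assume jk: "j \<in> C" "k \<in> C" "j \<noteq> k"
      have H: "Hn W n (u k) - Hn W n (u j) \<le> 1" using bkb[of j] bkb[of k] CF[OF jk(1)] CF[OF jk(2)] by auto
      have L: "1 - L1n W n (u j) (u k) / 2 \<le> 2 powr (- 3 * (\<delta> * sqrt (real n)))"
        using assms(4) CF[OF jk(1)] CF[OF jk(2)] jk(3) by (simp add: mult.assoc)
      have "WP W n (u j) (typical W n \<delta> (u k)) \<le> (1 - WP W n (u j) (typical W n \<delta> (u j))) + 2 * 2 powr (- (\<delta> * sqrt (real n)))"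
        using cross[OF ch _ H L] assms(2) by simp
      also have "\<dots> \<le> lam1 + 3 * 2 powr (- (\<delta> * sqrt (real n)))"
        using lam1[of "u j"] powr_ge_zero[of 2 "- (\<delta> * sqrt (real n))"] by linarith
      finally show "WP W n (u j) (typical W n \<delta> (u k)) \<le> lam1 + 3 * 2 powr (- \<delta> * sqrt (real n))" by simp
    qed
  qed
qed

end
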